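(* Let $t,r$ be positive integers and let $b$ be a positive integer having property $\mathcal{P}$ with respect to $2^r t$. Then $x^{2^r t}+b^{2^r}$ is reducible over $\mathbb{Z}$ if and only if $t$ is even, $r=1$, and $b=2d^2$ for some positive integer $d$.
   Context: For a positive integer $N$, a positive integer $b$ has property $\mathcal{P}$ with respect to $N$ if either $b$ is a prime number, or $b=(p_1^{b_1}p_2^{b_2}\cdots p_k^{b_k})^d$ where $k\ge 2$, $p_1,\dots,p_k$ are distinct primes, $b_1,\dots,b_k\ge 1$, $\gcd(b_1,\ldots,b_k)=1$, and $d$ is a positive integer with $\gcd(d,N)=1$. A monic polynomial in $\mathbb{Z}[x]$ of degree $\ge 1$ is reducible over $\mathbb{Z}$ if it is a product of two polynomials in $\mathbb{Z}[x]$ of degree at least $1$. *)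

theory Defs
  imports "HOL-Computational_Algebra.Computational_Algebra"
begin

definition property_P :: "nat \<Rightarrow> nat \<Rightarrow> bool" where
  "property_P N b \<longleftrightarrow> prime b \<or>
     (\<exists>m d. m > 0 \<and> d > 0 \<and> b = m ^ d \<and> card (prime_factors m) \<ge> 2 \<and>
        Gcd ((\<lambda>p. multiplicity p m) ` prime_factors m) = 1 \<and> coprime d N)"

definition reducible_Z :: "int poly \<Rightarrow> bool" where
  "reducible_Z f \<longleftrightarrow> (\<exists>g h. f = g * h \<and> degree g \<ge> 1 \<and> degree h \<ge> 1)"

end

theory Submission
  imports Defs "HOL-Computational_Algebra.Field_as_Ring"
begin

definition rootpoly :: "complex list \<Rightarrow> complex poly" where
  "rootpoly as = (\<Prod>a\<leftarrow>as. [:-a,1:])"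
definition psum :: "complex list \<Rightarrow> nat \<Rightarrow> complex" where
  "psum as s = (\<Sum>a\<leftarrow>as. a^s)"

lemma rootpoly_Cons: "rootpoly (a#as) = [:-a,1:] * rootpoly as"
  by (simp add: rootpoly_def)
lemma rootpoly_Nil[simp]: "rootpoly [] = 1"
  by (simp add: rootpoly_def)
lemma psum_Cons[simp]: "psum (a#as) s = a^s + psum as s"
  by (simp add: psum_def)
lemma psum_Nil[simp]: "psum [] s = 0"
  by (simp add: psum_def)

lemma rootpoly_nz: "rootpoly as \<noteq> 0"
proof (induct as)
  case (Cons a as)
  have "[:-a,1:] \<noteq> (0::complex poly)" by simp
  thus ?case using Cons by (simp only: rootpoly_Cons mult_eq_0_iff) simp
qed simp

lemma degree_rootpoly[simp]: "degree (rootpoly as) = length as"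
proof (induct as)
  case (Cons a as)
  thus ?case by (simp only: rootpoly_Cons, subst degree_mult_eq) (auto simp: rootpoly_nz)
qed simp

lemma lead_rootpoly[simp]: "coeff (rootpoly as) (length as) = 1"
proof -
  have "lead_coeff (rootpoly as) = 1"
  proof (induct as)
    case (Cons a as)
    thus ?case by (simp only: rootpoly_Cons lead_coeff_mult) simp
  qed simp
  thus ?thesis by simp
qed

lemma poly_rootpoly: "a \<in> set as \<Longrightarrow> poly (rootpoly as) a = 0"
  by (induct as) (auto simp: rootpoly_Cons)

lemma coeff_sum_list: "coeff (\<Sum>x\<leftarrow>xs. f x) n = (\<Sum>x\<leftarrow>xs. coeff (f x) n)"
  by (induct xs) auto

lemma poly_altdef_le:
  assumes "degree p \<le> N"
  shows "poly p (x::complex) = (\<Sum>i\<le>N. coeff p i * x ^ i)"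
proof -
  have "(\<Sum>i\<le>N. coeff p i * x ^ i) = (\<Sum>i\<le>degree p. coeff p i * x ^ i)"
    by (rule sum.mono_neutral_right) (use assms in \<open>auto simp: coeff_eq_0\<close>)
  thus ?thesis using poly_altdef[of p x] by simp
qed

lemma sd_coeff:
  fixes p :: "complex poly"
  shows "degree p \<le> N \<Longrightarrow> coeff (synthetic_div p c) l = (\<Sum>i=Suc l..N. coeff p i * c^(i - Suc l))"
proof (induct p arbitrary: l N)
  case 0
  then show ?case by simp
next
  case (pCons a p)
  show ?case
  proof (cases l)
    case 0
    have dp: "degree p \<le> N - 1" using pCons by (cases "p = 0") auto
    have "poly p c = (\<Sum>i\<le>N-1. coeff p i * c ^ i)"
      by (simp add: poly_altdef_le[OF dp])
    also have "\<dots> = (\<Sum>i=Suc 0..N. coeff (pCons a p) i * c^(i - Suc 0))"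
    proof (cases N)
      case 0 then show ?thesis using pCons(3) by (cases "p = 0") auto
    next
      case (Suc N')
      then show ?thesis
        by (simp add: atMost_atLeast0 sum.shift_bounds_cl_Suc_ivl del: sum.cl_ivl_Suc)
    qed
    finally show ?thesis using 0 by simp
  next
    case (Suc l')
    have dp: "degree p \<le> N - 1" using pCons by (cases "p = 0") auto
    have "coeff (synthetic_div (pCons a p) c) l = coeff (synthetic_div p c) l'" using Suc by simp
    also have "\<dots> = (\<Sum>i=Suc l'..N-1. coeff p i * c^(i - Suc l'))" by (rule pCons(2)[OF dp])
    also have "\<dots> = (\<Sum>i=Suc l..N. coeff (pCons a p) i * c^(i - Suc l))"
    proof (cases N)
      case 0 then show ?thesis using Suc by simp
    next
      case (Suc N')
      then show ?thesis using \<open>l = Suc l'\<close>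
        by (simp add: sum.shift_bounds_cl_Suc_ivl del: sum.cl_ivl_Suc)
    qed
    finally show ?thesis .
  qed
qed

lemma sd_root: "poly p b = 0 \<Longrightarrow> p = [:-b,1:] * synthetic_div p (b::complex)"
  using synthetic_div_correct'[of b p] by simp

lemma sd_of_mult: "synthetic_div ([:-b,1:] * q) (b::complex) = q"
proof -
  have "poly ([:-b,1:] * q) b = 0" by simp
  from sd_root[OF this] have "[:-b,1:] * q = [:-b,1:] * synthetic_div ([:-b,1:] * q) b" .
  moreover have "[:-b,1:] \<noteq> (0::complex poly)" by simp
  ultimately show ?thesis by (metis mult_left_cancel)
qed

lemma sum_list_cong_set: "(\<And>x. x \<in> set xs \<Longrightarrow> f x = g x) \<Longrightarrow> (\<Sum>x\<leftarrow>xs. f x) = (\<Sum>x\<leftarrow>xs. g x)"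
  by (induct xs) auto

lemma pderiv_rootpoly: "pderiv (rootpoly as) = (\<Sum>a\<leftarrow>as. synthetic_div (rootpoly as) a)"
proof (induct as)
  case Nil
  then show ?case by simp
next
  case (Cons a as)
  define R where "R = rootpoly as"
  have G: "rootpoly (a#as) = [:-a,1:] * R" by (simp add: R_def rootpoly_Cons)
  have "pderiv (rootpoly (a#as)) = R + [:-a,1:] * pderiv R"
  proof -
    have "pderiv [:-a,1:] = (1::complex poly)" by (simp add: pderiv_pCons)
    thus ?thesis unfolding G by (simp only: pderiv_mult) (simp add: algebra_simps)
  qed
  also have "pderiv R = (\<Sum>b\<leftarrow>as. synthetic_div R b)" using Cons by (simp add: R_def)
  also have "[:-a,1:] * (\<Sum>b\<leftarrow>as. synthetic_div R b) = (\<Sum>b\<leftarrow>as. [:-a,1:] * synthetic_div R b)"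
    by (induct as) (simp_all only: list.map sum_list.Cons sum_list.Nil distrib_left mult_zero_right)
  also have "\<dots> = (\<Sum>b\<leftarrow>as. synthetic_div (rootpoly (a#as)) b)"
  proof (rule sum_list_cong_set)
    fix b assume "b \<in> set as"
    hence "poly R b = 0" by (simp add: R_def poly_rootpoly)
    hence "R = [:-b,1:] * synthetic_div R b" by (rule sd_root)
    hence "rootpoly (a#as) = [:-b,1:] * ([:-a,1:] * synthetic_div R b)"
      unfolding G by (metis mult.left_commute)
    thus "[:-a,1:] * synthetic_div R b = synthetic_div (rootpoly (a#as)) b"
      by (metis sd_of_mult)
  qed
  finally show ?case unfolding G by (metis sd_of_mult sum_list.Cons list.map(2))
qed

lemma sum_list_sum_swap: "(\<Sum>a\<leftarrow>as. \<Sum>i\<in>I. f a i) = (\<Sum>i\<in>I. \<Sum>a\<leftarrow>as. f a i)"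
  by (induct as) (auto simp: sum.distrib)

lemma newton:
  "of_nat (Suc l) * coeff (rootpoly as) (Suc l) =
     (\<Sum>i=Suc l..length as. coeff (rootpoly as) i * psum as (i - Suc l))"
proof -
  have "of_nat (Suc l) * coeff (rootpoly as) (Suc l) = coeff (pderiv (rootpoly as)) l"
    by (simp add: coeff_pderiv)
  also have "\<dots> = (\<Sum>a\<leftarrow>as. coeff (synthetic_div (rootpoly as) a) l)"
    by (simp add: pderiv_rootpoly coeff_sum_list)
  also have "\<dots> = (\<Sum>a\<leftarrow>as. \<Sum>i=Suc l..length as. coeff (rootpoly as) i * a^(i - Suc l))"
    by (rule sum_list_cong_set) (simp add: sd_coeff)
  also have "\<dots> = (\<Sum>i=Suc l..length as. \<Sum>a\<leftarrow>as. coeff (rootpoly as) i * a^(i - Suc l))"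
    by (rule sum_list_sum_swap)
  also have "\<dots> = (\<Sum>i=Suc l..length as. coeff (rootpoly as) i * psum as (i - Suc l))"
    by (simp add: psum_def sum_list_const_mult)
  finally show ?thesis .
qed

lemma psum_0: "psum as 0 = of_nat (length as)"
  by (induct as) auto

lemma sum_poly_roots:
  "(\<Sum>i\<le>length as. coeff (rootpoly as) i * psum as (i + m)) = 0"
proof -
  have "(\<Sum>i\<le>length as. coeff (rootpoly as) i * psum as (i + m))
      = (\<Sum>a\<leftarrow>as. a^m * (\<Sum>i\<le>length as. coeff (rootpoly as) i * a ^ i))"
  proof -
    have "(\<Sum>i\<le>length as. coeff (rootpoly as) i * psum as (i + m))
        = (\<Sum>i\<le>length as. \<Sum>a\<leftarrow>as. coeff (rootpoly as) i * a^(i+m))"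
      by (simp add: psum_def sum_list_const_mult)
    also have "\<dots> = (\<Sum>a\<leftarrow>as. \<Sum>i\<le>length as. coeff (rootpoly as) i * a^(i+m))"
      by (rule sum_list_sum_swap[symmetric])
    also have "\<dots> = (\<Sum>a\<leftarrow>as. a^m * (\<Sum>i\<le>length as. coeff (rootpoly as) i * a ^ i))"
      by (rule sum_list_cong_set) (simp add: sum_distrib_left power_add mult_ac)
    finally show ?thesis .
  qed
  also have "\<dots> = (\<Sum>a\<leftarrow>as. a^m * poly (rootpoly as) a)"
    by (simp add: poly_altdef)
  also have "\<dots> = (\<Sum>a\<leftarrow>as. 0)"
    by (rule sum_list_cong_set) (simp add: poly_rootpoly)
  finally show ?thesis by simp
qed

lemma psum_rat:
  assumes "\<And>i. coeff (rootpoly as) i \<in> \<rat>"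
  shows "psum as s \<in> \<rat>"
proof (induct s rule: less_induct)
  case (less s)
  define k where "k = length as"
  define g where "g i = coeff (rootpoly as) i" for i
  show ?case
  proof (cases "s = 0")
    case True thus ?thesis by (simp add: psum_0)
  next
    case s0: False
    show ?thesis
    proof (cases "s < k")
      case True
      have "of_nat (Suc (k - s - 1)) * g (Suc (k - s - 1)) =
            (\<Sum>i=Suc (k - s - 1)..k. g i * psum as (i - Suc (k - s - 1)))"
        unfolding g_def k_def by (rule newton)
      moreover have "Suc (k - s - 1) = k - s" using True by simp
      ultimately have e: "of_nat (k - s) * g (k - s) = (\<Sum>i=k - s..k. g i * psum as (i - (k - s)))"
        by simp
      obtain k' where k': "k = Suc k'" using True by (cases k) auto
      have "(\<Sum>i=k - s..k. g i * psum as (i - (k - s))) =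
            (\<Sum>i=k - s..k'. g i * psum as (i - (k - s))) + g k * psum as s"
        using True k' by (simp add: sum.cl_ivl_Suc)
      also have "g k = 1" unfolding g_def k_def by simp
      finally have "psum as s = of_nat (k - s) * g (k - s) - (\<Sum>i=k - s..k'. g i * psum as (i - (k - s)))"
        using e by simp
      also have "\<dots> \<in> \<rat>"
      proof -
        have "(\<Sum>i=k - s..k'. g i * psum as (i - (k - s))) \<in> \<rat>"
        proof (rule Rats_sum)
          fix i assume "i \<in> {k - s..k'}"
          hence "i - (k - s) < s" using True k' s0 by auto
          thus "g i * psum as (i - (k - s)) \<in> \<rat>" using less assms by (simp add: g_def)
        qed
        thus ?thesis using assms by (simp add: g_def)
      qed
      finally show ?thesis .
    next
      case False
      have "(\<Sum>i\<le>k. g i * psum as (i + (s - k))) = 0"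
        unfolding g_def k_def by (rule sum_poly_roots)
      also have "(\<Sum>i\<le>k. g i * psum as (i + (s - k))) =
                 (\<Sum>i<k. g i * psum as (i + (s - k))) + g k * psum as s"
        using False by (simp add: lessThan_Suc_atMost[symmetric])
      also have "g k = 1" unfolding g_def k_def by simp
      finally have "psum as s = - (\<Sum>i<k. g i * psum as (i + (s - k)))"
        by (simp add: eq_neg_iff_add_eq_0 add.commute)
      also have "\<dots> \<in> \<rat>"
      proof -
        have "(\<Sum>i<k. g i * psum as (i + (s - k))) \<in> \<rat>"
        proof (rule Rats_sum)
          fix i assume "i \<in> {..<k}"
          hence "i + (s - k) < s" using False by auto
          thus "g i * psum as (i + (s - k)) \<in> \<rat>" using less assms by (simp add: g_def)
        qed
        thus ?thesis by simp
      qed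
      finally show ?thesis .
    qed
  qed
qed

lemma rootpoly_rat:
  assumes "\<And>s. psum as s \<in> \<rat>"
  shows "coeff (rootpoly as) j \<in> \<rat>"
proof -
  define k where "k = length as"
  define g where "g i = coeff (rootpoly as) i" for i
  have pos: "g j \<in> \<rat>" if "1 \<le> j" for j
  proof -
    have "\<forall>j. k - j = n \<longrightarrow> 1 \<le> j \<longrightarrow> g j \<in> \<rat>" for n
    proof (induct n rule: less_induct)
      case (less n)
      show ?case
      proof (intro allI impI)
        fix j assume jn: "k - j = n" and j1: "1 \<le> j"
        show "g j \<in> \<rat>"
        proof (cases "k \<le> j")
          case True
          thus ?thesis
            by (cases "j = k") (auto simp: g_def k_def coeff_eq_0)
        next
          case False
          have "of_nat (Suc (j - 1)) * g (Suc (j - 1)) =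
                (\<Sum>i=Suc (j - 1)..k. g i * psum as (i - Suc (j - 1)))"
            unfolding g_def k_def by (rule newton)
          hence "of_nat j * g j = (\<Sum>i=j..k. g i * psum as (i - j))" using j1 by simp
          also have "\<dots> = g j * psum as 0 + (\<Sum>i=Suc j..k. g i * psum as (i - j))"
            using False by (simp add: sum.atLeast_Suc_atMost)
          finally have "(of_nat j - of_nat k) * g j = (\<Sum>i=Suc j..k. g i * psum as (i - j))"
            by (simp add: psum_0 k_def algebra_simps)
          moreover have "(of_nat j - of_nat k :: complex) \<noteq> 0" using False by simp
          ultimately have "g j = (\<Sum>i=Suc j..k. g i * psum as (i - j)) / (of_nat j - of_nat k)"
            by (simp add: field_simps)
          also have "\<dots> \<in> \<rat>"
          proof -
            have "(\<Sum>i=Suc j..k. g i * psum as (i - j)) \<in> \<rat>"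
            proof (rule Rats_sum)
              fix i assume i: "i \<in> {Suc j..k}"
              hence "k - i < n" using jn False by auto
              hence "g i \<in> \<rat>" using less i j1 by auto
              thus "g i * psum as (i - j) \<in> \<rat>" using assms by simp
            qed
            thus ?thesis by simp
          qed
          finally show ?thesis .
        qed
      qed
    qed
    thus ?thesis using that by blast
  qed
  show ?thesis
  proof (cases "j = 0")
    case False thus ?thesis using pos[of j] by (simp add: g_def)
  next
    case True
    show ?thesis
    proof (cases "k = 0")
      case True
      hence "as = []" by (simp add: k_def)
      thus ?thesis using \<open>j = 0\<close> by simp
    next
      case knz: False
      have "(\<Sum>i\<le>k. g i * psum as (i + 0)) = 0"
        unfolding g_def k_def by (rule sum_poly_roots)
      also have "(\<Sum>i\<le>k. g i * psum as (i + 0)) = g 0 * of_nat k + (\<Sum>i=Suc 0..k. g i * psum as i)"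
        by (simp add: atMost_atLeast0 sum.atLeast_Suc_atMost psum_0 k_def)
      finally have "g 0 = - (\<Sum>i=Suc 0..k. g i * psum as i) / of_nat k"
        using knz by (simp add: field_simps eq_neg_iff_add_eq_0)
      also have "\<dots> \<in> \<rat>"
      proof -
        have "(\<Sum>i=Suc 0..k. g i * psum as i) \<in> \<rat>"
          by (rule Rats_sum) (use pos assms in auto)
        thus ?thesis by simp
      qed
      finally show ?thesis using True by (simp add: g_def)
    qed
  qed
qed

lemma psum_map_pow: "psum (map (\<lambda>a. a^h) as) s = psum as (h * s)"
  by (induct as) (auto simp: power_mult)

lemma graeffe_rat:
  assumes "\<And>i. coeff (rootpoly as) i \<in> \<rat>"
  shows "coeff (rootpoly (map (\<lambda>a. a^h) as)) j \<in> \<rat>"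
  by (rule rootpoly_rat) (simp add: psum_map_pow psum_rat[OF assms])

definition GQ :: "complex \<Rightarrow> bool" where
  "GQ z \<longleftrightarrow> Re z \<in> \<rat> \<and> Im z \<in> \<rat>"

lemma cr_of_rat: "complex_of_real (of_rat r) = of_rat r"
  by (cases r) (simp add: of_rat_rat)
lemma Re_of_rat: "Re (of_rat r :: complex) = of_rat r"
  by (metis Re_complex_of_real cr_of_rat)
lemma Im_of_rat: "Im (of_rat r :: complex) = 0"
  by (metis Im_complex_of_real cr_of_rat)
lemma prod_list_mult_distrib': "(\<Prod>x\<leftarrow>xs. f x * g x) = (\<Prod>x\<leftarrow>xs. f x) * (\<Prod>x\<leftarrow>xs. g x :: complex)"
  by (induct xs) (auto simp: mult_ac)

lemma GQ_Rats: "(z::complex) \<in> \<rat> \<Longrightarrow> GQ z"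
  by (induct rule: Rats_induct) (simp add: GQ_def Re_of_rat Im_of_rat)
lemma GQ_add: "GQ a \<Longrightarrow> GQ b \<Longrightarrow> GQ (a + b)" by (simp add: GQ_def)
lemma GQ_diff: "GQ a \<Longrightarrow> GQ b \<Longrightarrow> GQ (a - b)" by (simp add: GQ_def)
lemma GQ_uminus: "GQ a \<Longrightarrow> GQ (- a)" by (simp add: GQ_def)
lemma GQ_mult: "GQ a \<Longrightarrow> GQ b \<Longrightarrow> GQ (a * b)" by (simp add: GQ_def)
lemma GQ_divide: "GQ a \<Longrightarrow> GQ b \<Longrightarrow> GQ (a / b)"
  by (simp add: GQ_def Re_divide Im_divide)
lemma GQ_power: "GQ a \<Longrightarrow> GQ (a ^ n)"
  by (induct n) (auto intro: GQ_mult simp: GQ_Rats)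
lemma GQ_prod_list: "(\<And>x. x \<in> set xs \<Longrightarrow> GQ (f x)) \<Longrightarrow> GQ (\<Prod>x\<leftarrow>xs. f x)"
  by (induct xs) (auto intro: GQ_mult simp: GQ_Rats)
lemma GQ_sum: "(\<And>x. x \<in> A \<Longrightarrow> GQ (f x)) \<Longrightarrow> GQ (\<Sum>x\<in>A. f x)"
  by (induct A rule: infinite_finite_induct) (auto intro: GQ_add simp: GQ_Rats)

lemma GQ_poly: "(\<And>i. coeff p i \<in> \<rat>) \<Longrightarrow> GQ z \<Longrightarrow> GQ (poly p z)"
  unfolding poly_altdef by (intro GQ_sum GQ_mult) (auto intro: GQ_power GQ_Rats)

lemma poly_rootpoly_eval: "poly (rootpoly as) x = (\<Prod>a\<leftarrow>as. x - a)"
  by (induct as) (auto simp: rootpoly_Cons algebra_simps)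

lemma prod_list_one: "(\<Prod>b\<leftarrow>bs. 1) = (1::'a::comm_monoid_mult)"
  by (induct bs) auto

lemma prod_list_swap: "(\<Prod>a\<leftarrow>as. \<Prod>b\<leftarrow>bs. f a b) = (\<Prod>b\<leftarrow>bs. \<Prod>a\<leftarrow>as. f a (b::'b) :: complex)"
  by (induct as) (auto simp: prod_list_mult_distrib' prod_list_one)

lemma prod_list_const_mult: "(\<Prod>x\<leftarrow>xs. c * f x) = c ^ length xs * (\<Prod>x\<leftarrow>xs. f x :: complex)"
  by (induct xs) auto

lemma complex_rootpoly:
  fixes p :: "complex poly"
  assumes "p \<noteq> 0"
  obtains as where "p = smult (lead_coeff p) (rootpoly as)" "length as = degree p"
proof -
  obtain as where as: "mset as = proots p" using ex_mset by blast
  have "(\<Prod>x\<in>#proots p. [:-x, 1:]) = rootpoly as"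
    unfolding rootpoly_def by (subst as[symmetric], subst mset_map[symmetric], subst prod_mset_prod_list) simp
  hence "p = smult (lead_coeff p) (rootpoly as)"
    using complex_poly_decompose_multiset[of p] by simp
  moreover have "length as = degree p"
    using as size_proots_complex[of p] by (metis size_mset)
  ultimately show ?thesis using that by blast
qed

lemma norm_GQ:
  fixes Q :: "complex poly"
  assumes rc: "\<And>i. coeff Q i \<in> \<rat>" and sig: "rootpoly ss = monom 1 h - [:c:]" and c: "GQ c"
  shows "GQ (\<Prod>s\<leftarrow>ss. poly Q s)"
proof (cases "Q = 0")
  case True thus ?thesis by (intro GQ_prod_list) (simp add: GQ_def)
next
  case False
  obtain rs where rs: "Q = smult (lead_coeff Q) (rootpoly rs)" "length rs = degree Q"
    using complex_rootpoly[OF False] by blast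
  define lc where "lc = lead_coeff Q"
  have lc0: "lc \<noteq> 0" using False by (simp add: lc_def)
  have lcQ: "lc \<in> \<rat>" using rc by (simp add: lc_def)
  have rcr: "coeff (rootpoly rs) i \<in> \<rat>" for i
  proof -
    have "coeff Q i = lc * coeff (rootpoly rs) i" using rs(1) by (metis coeff_smult lc_def)
    hence "coeff (rootpoly rs) i = coeff Q i / lc" using lc0 by simp
    thus ?thesis using rc lcQ by simp
  qed
  have "(\<Prod>s\<leftarrow>ss. poly Q s) = (\<Prod>s\<leftarrow>ss. lc * (\<Prod>r\<leftarrow>rs. s - r))"
    by (rule arg_cong[where f = prod_list], rule map_cong[OF refl], subst rs(1))
       (simp add: poly_rootpoly_eval lc_def)
  also have "\<dots> = lc ^ length ss * (\<Prod>s\<leftarrow>ss. \<Prod>r\<leftarrow>rs. s - r)"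
    by (rule prod_list_const_mult)
  also have "(\<Prod>s\<leftarrow>ss. \<Prod>r\<leftarrow>rs. s - r) = (\<Prod>r\<leftarrow>rs. \<Prod>s\<leftarrow>ss. s - r)"
    by (rule prod_list_swap)
  also have "\<dots> = (\<Prod>r\<leftarrow>rs. (- 1) ^ length ss * (\<Prod>s\<leftarrow>ss. r - s))"
    by (rule arg_cong[where f = prod_list], rule map_cong[OF refl])
       (subst prod_list_const_mult[symmetric], simp)
  also have "\<dots> = (\<Prod>r\<leftarrow>rs. (- 1) ^ length ss * (r ^ h - c))"
    by (rule arg_cong[where f = prod_list], rule map_cong[OF refl])
       (metis poly_rootpoly_eval sig poly_diff poly_monom poly_pCons poly_0 mult_1 add_0_right mult_zero_right)
  also have "\<dots> = (\<Prod>r\<leftarrow>rs. (- ((- 1) ^ length ss)) * (c - r ^ h))"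
    by (rule arg_cong[where f = prod_list], rule map_cong[OF refl]) (simp add: algebra_simps)
  also have "\<dots> = (- ((- 1) ^ length ss)) ^ length rs * (\<Prod>r\<leftarrow>rs. c - r ^ h)"
    by (rule prod_list_const_mult)
  also have "(\<Prod>r\<leftarrow>rs. c - r ^ h) = poly (rootpoly (map (\<lambda>a. a^h) rs)) c"
    by (simp add: poly_rootpoly_eval o_def)
  finally have eq: "(\<Prod>s\<leftarrow>ss. poly Q s) = lc ^ length ss * ((- ((- 1) ^ length ss)) ^ length rs *
        poly (rootpoly (map (\<lambda>a. a^h) rs)) c)" .
  have "GQ (poly (rootpoly (map (\<lambda>a. a^h) rs)) c)"
    by (rule GQ_poly[OF graeffe_rat[OF rcr] c])
  thus ?thesis unfolding eq
    by (intro GQ_mult GQ_power) (auto intro: GQ_Rats lcQ)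
qed

lemma Lstar_complex:
  fixes E Q :: "complex poly" and C :: real and h :: nat
  assumes rcE: "\<And>i. coeff E i \<in> \<rat>" and rcO: "\<And>i. coeff Q i \<in> \<rat>"
    and h: "h \<ge> 1" and C: "C > 0" "C \<in> \<rat>"
    and eq: "E^2 - [:0,1:] * Q^2 = monom 1 (2*h) + [:complex_of_real (C^2):]"
  shows "\<exists>a\<in>\<rat>. C = 2 * a^2"
proof -
  define c where "c = \<i> * complex_of_real C"
  define P where "P = monom 1 h - [:c:]"
  have cP: "coeff P i = (if i = h then 1 else if i = 0 then - c else 0)" for i
    using h by (auto simp: P_def coeff_monom coeff_pCons split: nat.split)
  have degP: "degree P = h"
  proof (rule order_antisym)
    show "degree P \<le> h" by (rule degree_le) (auto simp: cP)
    show "h \<le> degree P" by (rule le_degree) (simp add: cP)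
  qed
  have lcP: "lead_coeff P = 1" using degP cP by simp
  have P0: "P \<noteq> 0" using lcP by auto
  obtain ss where ss: "P = smult (lead_coeff P) (rootpoly ss)" "length ss = degree P"
    using complex_rootpoly[OF P0] by blast
  have rs: "rootpoly ss = P" using ss(1) lcP by simp
  have rs': "rootpoly ss = monom 1 h - [:c:]" using rs by (simp add: P_def)
  have c0: "c \<noteq> 0" using C by (simp add: c_def)
  have roots: "s^h = c" if "s \<in> set ss" for s
  proof -
    have "poly P s = 0" using poly_rootpoly[OF that] rs by simp
    thus ?thesis by (simp add: P_def poly_monom)
  qed
  have s0: "s \<noteq> 0" if "s \<in> set ss" for s
    using roots[OF that] c0 h by (cases h) auto
  have Fs: "poly E s ^ 2 = s * poly Q s ^ 2" if "s \<in> set ss" for s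
  proof -
    have "s ^ (2*h) = c^2" using roots[OF that] by (metis power_mult mult.commute)
    also have "\<dots> = - complex_of_real (C^2)" by (simp add: c_def power_mult_distrib)
    finally have "poly (E^2 - [:0,1:] * Q^2) s = 0" unfolding eq by (simp add: poly_monom)
    thus ?thesis by simp
  qed
  have Os: "poly Q s \<noteq> 0" if sin: "s \<in> set ss" for s
  proof
    assume O0: "poly Q s = 0"
    hence E0: "poly E s = 0" using Fs[OF sin] by simp
    obtain E1 where E1: "E = [:-s,1:] * E1" using E0 by (metis dvdE poly_eq_0_iff_dvd)
    obtain O1 where O1: "Q = [:-s,1:] * O1" using O0 by (metis dvdE poly_eq_0_iff_dvd)
    define H where "H = E1^2 - [:0,1:] * O1^2"
    have FH: "monom 1 (2*h) + [:complex_of_real (C^2):] = [:-s,1:] * ([:-s,1:] * H)"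
      unfolding eq[symmetric] E1 O1 H_def by (simp add: algebra_simps power2_eq_square)
    have "poly (pderiv ([:-s,1:] * ([:-s,1:] * H))) s = 0"
      by (simp only: pderiv_mult poly_add poly_mult) simp
    hence "poly (pderiv (monom 1 (2*h) + [:complex_of_real (C^2):])) s = 0" by (simp only: FH)
    hence "of_nat (2*h) * s ^ (2*h - 1) = 0"
      by (simp add: pderiv_add pderiv_monom poly_monom pderiv_pCons)
    thus False using h s0[OF sin] by simp
  qed
  define NE where "NE = (\<Prod>s\<leftarrow>ss. poly E s)"
  define NO where "NO = (\<Prod>s\<leftarrow>ss. poly Q s)"
  have NO0: "NO \<noteq> 0" unfolding NO_def using Os by (auto simp: prod_list_zero_iff)
  have GQc: "GQ c" using C by (simp add: c_def GQ_def)
  have GNE: "GQ NE" unfolding NE_def by (rule norm_GQ[OF rcE rs' GQc])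
  have GNO: "GQ NO" unfolding NO_def by (rule norm_GQ[OF rcO rs' GQc])
  have "NE^2 = (\<Prod>s\<leftarrow>ss. poly E s ^ 2)"
    unfolding NE_def power2_eq_square by (simp add: prod_list_mult_distrib')
  also have "\<dots> = (\<Prod>s\<leftarrow>ss. s * poly Q s ^ 2)"
    by (rule arg_cong[where f = prod_list], rule map_cong[OF refl]) (simp add: Fs)
  also have "\<dots> = (\<Prod>s\<leftarrow>ss. s) * NO^2"
    unfolding NO_def power2_eq_square by (simp add: prod_list_mult_distrib')
  finally have NE2: "NE^2 = (\<Prod>s\<leftarrow>ss. s) * NO^2" .
  have "(\<Prod>s\<leftarrow>ss. 0 - s) = poly P 0" using rs poly_rootpoly_eval[of ss 0] by simp
  also have "\<dots> = - c" using h by (simp add: P_def poly_monom)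
  finally have A1: "(\<Prod>s\<leftarrow>ss. (-1) * s) = - c" by simp
  have A2: "(\<Prod>s\<leftarrow>ss. (-1) * s) = (-1)^length ss * (\<Prod>s\<leftarrow>ss. s)"
    by (rule prod_list_const_mult)
  have "(-1)^h * (\<Prod>s\<leftarrow>ss. s) = - c" using A1 A2 ss(2) degP by metis
  hence "(-1)^h * ((-1)^h * (\<Prod>s\<leftarrow>ss. s)) = (-1)^h * (- c)" by simp
  hence prods: "(\<Prod>s\<leftarrow>ss. s) = - ((-1)^h * c)"
    by (simp add: power_mult_distrib[symmetric] mult.assoc[symmetric])
  define w where "w = NE / NO"
  have Gw: "GQ w" unfolding w_def by (rule GQ_divide[OF GNE GNO])
  have w2: "w^2 = - ((-1)^h * c)" unfolding w_def using NE2 NO0 prods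
    by (simp add: power_divide field_simps)
  have ReIm: "Re w ^ 2 - Im w ^ 2 = 0 \<and> \<bar>2 * Re w * Im w\<bar> = C"
  proof (cases "even h")
    case True
    hence "w^2 = - c" using w2 by simp
    hence "Re (w^2) = 0" "Im (w^2) = - C" unfolding c_def by simp_all
    hence "Re w ^ 2 - Im w ^ 2 = 0" "2 * Re w * Im w = - C" unfolding Re_power2 Im_power2 by simp_all
    thus ?thesis using C(1) by linarith
  next
    case False
    hence "w^2 = c" using w2 by simp
    hence "Re (w^2) = 0" "Im (w^2) = C" unfolding c_def by simp_all
    hence "Re w ^ 2 - Im w ^ 2 = 0" "2 * Re w * Im w = C" unfolding Re_power2 Im_power2 by simp_all
    thus ?thesis using C(1) by linarith
  qed
  hence "Re w ^ 2 = Im w ^ 2" by simp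
  hence ab: "\<bar>Re w\<bar> = \<bar>Im w\<bar>" by (metis power2_abs abs_ge_zero power2_eq_iff_nonneg)
  have "C = 2 * (\<bar>Re w\<bar> * \<bar>Im w\<bar>)" using ReIm by (simp add: abs_mult)
  also have "\<dots> = 2 * (\<bar>Re w\<bar> * \<bar>Re w\<bar>)" using ab by simp
  also have "\<bar>Re w\<bar> * \<bar>Re w\<bar> = Re w ^ 2" by (simp add: power2_eq_square)
  finally have "C = 2 * Re w ^ 2" .
  moreover have "Re w \<in> \<rat>" using Gw by (simp add: GQ_def)
  ultimately show ?thesis by blast
qed

abbreviation cpoly :: "rat poly \<Rightarrow> complex poly" where
  "cpoly p \<equiv> map_poly of_rat p"

lemma cpoly_add: "cpoly (p + q) = cpoly p + cpoly q"
  by (intro poly_eqI) (simp add: coeff_map_poly of_rat_add)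
lemma cpoly_diff: "cpoly (p - q) = cpoly p - cpoly q"
  by (intro poly_eqI) (simp add: coeff_map_poly of_rat_diff)
lemma cpoly_mult: "cpoly (p * q) = cpoly p * cpoly q"
  by (intro poly_eqI) (simp add: coeff_map_poly coeff_mult of_rat_sum of_rat_mult)
lemma cpoly_power: "cpoly (p ^ n) = cpoly p ^ n"
  by (induct n) (simp_all add: cpoly_mult)
lemma cpoly_pCons: "cpoly (pCons a p) = pCons (of_rat a) (cpoly p)"
  by (simp add: map_poly_pCons)
lemma cpoly_monom: "cpoly (monom a n) = monom (of_rat a) n"
  by (simp add: map_poly_monom)
lemma cpoly_rat: "coeff (cpoly p) i \<in> \<rat>"
  by (simp add: coeff_map_poly)

lemma Lstar_rat:
  fixes E Q :: "rat poly" and C h :: nat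
  assumes h: "h \<ge> 1" and C: "C > 0"
    and eq: "E^2 - [:0,1:] * Q^2 = monom 1 (2*h) + [:of_nat C ^ 2:]"
  shows "\<exists>a\<in>\<rat>. real C = 2 * a^2"
proof (rule Lstar_complex[OF cpoly_rat cpoly_rat h])
  show "real C > 0" "real C \<in> \<rat>" using C by auto
  have "cpoly (E^2 - [:0,1:] * Q^2) = cpoly (monom 1 (2*h) + [:of_nat C ^ 2:])" using eq by simp
  thus "(cpoly E)^2 - [:0,1:] * (cpoly Q)^2 = monom 1 (2*h) + [:complex_of_real ((real C)^2):]"
    by (simp add: cpoly_add cpoly_diff cpoly_mult cpoly_power cpoly_monom cpoly_pCons of_rat_power of_rat_of_nat_eq)
qed

abbreviation X2 :: "rat poly" where "X2 \<equiv> [:0,0,1:]"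
definition neg :: "rat poly \<Rightarrow> rat poly" where "neg p = pcompose p [:0,-1:]"

lemma poly_neg: "poly (neg p) x = poly p (-x)"
  by (simp add: neg_def poly_pcompose)
lemma neg_neg: "neg (neg p) = p"
  by (rule poly_eq_poly_eq_iff[THEN iffD1]) (auto simp: poly_neg)
lemma neg_mult: "neg (p * q) = neg p * neg q"
  by (rule poly_eq_poly_eq_iff[THEN iffD1]) (auto simp: poly_neg)
lemma neg_X2comp: "neg (pcompose p X2) = pcompose p X2"
  by (rule poly_eq_poly_eq_iff[THEN iffD1]) (auto simp: poly_neg poly_pcompose)
lemma coeff_neg: "coeff (neg p) n = (-1)^n * coeff p n"
  unfolding neg_def
proof (induct p arbitrary: n)
  case 0 then show ?case by simp
next
  case (pCons a p)
  show ?case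
    using pCons(2)[of "n - 1"] by (cases n) (auto simp: pcompose_pCons)
qed
lemma degree_neg: "degree (neg p) = degree p"
  by (simp add: neg_def degree_pcompose)

lemma coeff_X2comp: "coeff (pcompose p X2) n = (if even n then coeff p (n div 2) else 0)"
proof (induct p arbitrary: n)
  case 0 then show ?case by simp
next
  case (pCons a p)
  show ?case
  proof (cases n)
    case 0 then show ?thesis by (simp add: pcompose_pCons)
  next
    case (Suc m)
    show ?thesis
    proof (cases m)
      case 0 then show ?thesis using Suc by (simp add: pcompose_pCons)
    next
      case (Suc k)
      then show ?thesis using \<open>n = Suc m\<close> pCons(2)[of k] by (simp add: pcompose_pCons)
    qed
  qed
qed

lemma X2comp_inj: "pcompose a X2 = pcompose b X2 \<Longrightarrow> a = b"
proof (rule poly_eqI)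
  fix n assume "pcompose a X2 = pcompose b X2"
  hence "coeff (pcompose a X2) (2*n) = coeff (pcompose b X2) (2*n)" by simp
  thus "coeff a n = coeff b n" by (simp add: coeff_X2comp)
qed

lemma degree_X2comp: "degree (pcompose p X2) = 2 * degree p"
  by (simp add: degree_pcompose)

definition ev :: "rat poly \<Rightarrow> rat poly" where
  "ev p = (\<Sum>i\<le>degree p. monom (coeff p (2*i)) i)"
definition od :: "rat poly \<Rightarrow> rat poly" where
  "od p = (\<Sum>i\<le>degree p. monom (coeff p (2*i+1)) i)"

lemma coeff_ev: "coeff (ev p) i = coeff p (2*i)"
  by (auto simp: ev_def coeff_sum coeff_monom coeff_eq_0)
lemma coeff_od: "coeff (od p) i = coeff p (2*i+1)"
  by (auto simp: od_def coeff_sum coeff_monom coeff_eq_0)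

lemma coeff_xmult: "coeff ([:0,1:] * (p::rat poly)) n = (if n = 0 then 0 else coeff p (n - 1))"
  by (cases n) auto
lemma coeff_pCons0: "coeff (pCons 0 (p::rat poly)) n = (if n = 0 then 0 else coeff p (n - 1))"
  by (cases n) auto

lemma decomp: "p = pcompose (ev p) X2 + [:0,1:] * pcompose (od p) X2"
proof (rule poly_eqI)
  fix n
  show "coeff p n = coeff (pcompose (ev p) X2 + [:0,1:] * pcompose (od p) X2) n"
  proof (cases "even n")
    case True
    then show ?thesis by (auto simp: coeff_X2comp coeff_pCons0 coeff_ev)
  next
    case False
    then obtain k where "n = 2*k+1" by (metis oddE)
    then show ?thesis by (auto simp: coeff_X2comp coeff_pCons0 coeff_od)
  qed
qed

lemma poly_decomp: "poly p x = poly (ev p) (x^2) + x * poly (od p) (x^2)"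
  by (subst decomp) (simp add: poly_pcompose power2_eq_square)

lemma mult_neg: "p * neg p = pcompose ((ev p)^2 - [:0,1:] * (od p)^2) X2"
proof (rule poly_eq_poly_eq_iff[THEN iffD1], rule ext)
  fix x :: rat
  have "poly (p * neg p) x = poly p x * poly p (-x)" by (simp add: poly_neg)
  also have "\<dots> = (poly (ev p) (x^2) + x * poly (od p) (x^2)) * (poly (ev p) (x^2) - x * poly (od p) (x^2))"
    by (simp add: poly_decomp[of p x] poly_decomp[of p "-x"])
  also have "\<dots> = poly (pcompose ((ev p)^2 - [:0,1:] * (od p)^2) X2) x"
    by (simp add: poly_pcompose power2_eq_square algebra_simps)
  finally show "poly (p * neg p) x = poly (pcompose ((ev p)^2 - [:0,1:] * (od p)^2) X2) x" .
qed

lemma even_poly: "neg p = p \<Longrightarrow> p = pcompose (ev p) X2"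
proof -
  assume np: "neg p = p"
  have "od p = 0"
  proof (rule poly_eqI)
    fix i
    have "coeff (neg p) (2*i+1) = coeff p (2*i+1)" using np by simp
    hence "- coeff p (2*i+1) = coeff p (2*i+1)" by (simp add: coeff_neg)
    thus "coeff (od p) i = coeff 0 i" by (simp add: coeff_od)
  qed
  thus ?thesis using decomp[of p] by simp
qed

lemma dvd_X2comp: assumes "pcompose a X2 dvd pcompose b X2" shows "a dvd b"
proof (cases "a = 0")
  case True
  hence "pcompose b X2 = 0" using assms by simp
  hence "pcompose b X2 = pcompose 0 X2" by simp
  hence "b = 0" by (rule X2comp_inj)
  thus ?thesis by simp
next
  case False
  define q where "q = b div a"
  define r where "r = b mod a"
  have b: "b = a * q + r" by (simp add: q_def r_def)
  have "pcompose b X2 = pcompose a X2 * pcompose q X2 + pcompose r X2"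
    by (subst b) (simp add: pcompose_add pcompose_mult)
  hence "pcompose a X2 dvd pcompose r X2" using assms by (metis dvd_add_right_iff dvd_triv_left)
  moreover have "r = 0 \<or> degree r < degree a" using False by (cases "r = 0") (auto simp: r_def degree_mod_less')
  ultimately have "r = 0"
  proof (cases "r = 0")
    case False
    assume d: "pcompose a X2 dvd pcompose r X2" and rr: "r = 0 \<or> degree r < degree a"
    have "pcompose r X2 \<noteq> 0"
    proof
      assume "pcompose r X2 = 0"
      hence "pcompose r X2 = pcompose 0 X2" by simp
      thus False using False X2comp_inj by blast
    qed
    hence "degree (pcompose a X2) \<le> degree (pcompose r X2)" using d by (metis dvd_imp_degree_le)
    hence "degree a \<le> degree r" by (simp add: degree_X2comp)
    thus ?thesis using rr False by simp
  qed
  thus ?thesis using b by simp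
qed

lemma lead_neg: "lead_coeff (neg p) = (-1)^degree p * lead_coeff p"
  by (simp add: degree_neg coeff_neg)

lemma neg_dvd: "g dvd pcompose F X2 \<Longrightarrow> neg g dvd pcompose F X2"
proof -
  assume "g dvd pcompose F X2"
  then obtain k where "pcompose F X2 = g * k" by (elim dvdE)
  hence "neg (pcompose F X2) = neg g * neg k" by (simp add: neg_mult)
  thus ?thesis by (simp add: neg_X2comp)
qed

lemma lead_X2comp: "lead_coeff (pcompose p X2) = lead_coeff p"
  by (simp add: degree_X2comp coeff_X2comp)

lemma step:
  fixes F g :: "rat poly"
  assumes F: "irreducible F" "lead_coeff F = 1" "poly F 0 \<noteq> 0"
    and g: "irreducible g" "lead_coeff g = 1" "g dvd pcompose F X2" "degree g < 2 * degree F"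
  shows "\<exists>E Q. F = smult ((-1)^degree F) (E^2 - [:0,1:] * Q^2)"
proof -
  define gn where "gn = neg g"
  define W where "W = (ev g)^2 - [:0,1:] * (od g)^2"
  have g0: "g \<noteq> 0" using g(1) by auto
  have dg: "degree g \<ge> 1"
  proof (rule ccontr)
    assume "\<not> degree g \<ge> 1"
    hence "is_unit g" using is_unit_iff_degree[OF g0] by simp
    thus False using irreducible_not_unit[OF g(1)] by simp
  qed
  have F0: "F \<noteq> 0" using F(1) by auto
  have dgn: "degree gn = degree g" by (simp add: gn_def degree_neg)
  have lgn: "lead_coeff gn = (-1)^degree g" using g(2) by (simp add: gn_def lead_neg)
  have gn0: "gn \<noteq> 0" using lgn by auto
  have gndvd: "gn dvd pcompose F X2" unfolding gn_def by (rule neg_dvd[OF g(3)])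
  have prod: "g * gn = pcompose W X2" unfolding gn_def W_def by (rule mult_neg)
  have dprod: "degree (g * gn) = 2 * degree g" using degree_mult_eq[OF g0 gn0] dgn by linarith
  have "degree (pcompose W X2) = 2 * degree g" using dprod by (simp only: prod)
  hence dW: "degree W = degree g" unfolding degree_X2comp by linarith
  have lW: "lead_coeff W = (-1)^degree g"
  proof -
    have A: "lead_coeff (g * gn) = (-1)^degree g" using g(2) lgn by (simp add: lead_coeff_mult)
    have B: "lead_coeff W = lead_coeff (g * gn)" by (simp only: prod lead_X2comp)
    show ?thesis by (rule trans[OF B A])
  qed
  have pg: "prime_elem g" by (rule prime_elem_iff_irreducible[THEN iffD2, OF g(1)])
  show ?thesis
  proof (cases "g dvd gn")
    case False
    obtain k where k: "pcompose F X2 = gn * k" using gndvd by (elim dvdE)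
    have "g dvd gn * k" using g(3) k by simp
    hence "g dvd gn \<or> g dvd k" by (rule prime_elem_dvd_multD[OF pg])
    hence "g dvd k" using False by blast
    hence "g * gn dvd pcompose F X2" using k by (simp add: mult.commute)
    hence "pcompose W X2 dvd pcompose F X2" by (simp only: prod)
    hence WF: "W dvd F" by (rule dvd_X2comp)
    have W0: "W \<noteq> 0" using lW by auto
    have "F dvd W \<or> is_unit W" using irreducibleD'[OF F(1) WF] .
    moreover have "\<not> is_unit W" using is_unit_iff_degree[OF W0] dW dg by simp
    ultimately have FW: "F dvd W" by blast
    have dWF: "degree W = degree F"
      using dvd_imp_degree_le[OF FW W0] dvd_imp_degree_le[OF WF F0] by simp
    obtain k where k: "F = W * k" using WF by (elim dvdE)
    have k0: "k \<noteq> 0" using k F0 by auto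
    have "degree k = 0" using k dWF W0 k0 degree_mult_eq[OF W0 k0] by simp
    then obtain \<kappa> where kk: "k = [:\<kappa>:]" by (elim degree_eq_zeroE)
    have "lead_coeff F = lead_coeff W * lead_coeff k" using k by (simp only: lead_coeff_mult)
    hence e1: "1 = (-1)^degree g * \<kappa>" using F(2) kk lW by simp
    have sq: "(-1::rat)^degree g * (-1)^degree g = 1"
      by (simp add: power_add[symmetric])
    have "\<kappa> = ((-1)^degree g * (-1)^degree g) * \<kappa>" by (simp only: sq mult_1_left)
    also have "\<dots> = (-1)^degree g * ((-1)^degree g * \<kappa>)" by (simp only: mult.assoc)
    also have "\<dots> = (-1)^degree g" by (simp only: e1[symmetric] mult_1_right)
    finally have kap: "\<kappa> = (-1)^degree F" using dW dWF by simp
    have "F = smult \<kappa> W" using k kk by simp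
    hence "F = smult ((-1)^degree F) ((ev g)^2 - [:0,1:] * (od g)^2)" using kap by (simp add: W_def)
    thus ?thesis by (intro exI)
  next
    case True
    then obtain k where k: "gn = g * k" by (elim dvdE)
    have k0: "k \<noteq> 0" using k gn0 by auto
    have "degree k = 0" using k dgn degree_mult_eq[OF g0 k0] by simp
    then obtain \<kappa> where kk: "k = [:\<kappa>:]" by (elim degree_eq_zeroE)
    have "lead_coeff gn = lead_coeff g * lead_coeff k" using k by (simp only: lead_coeff_mult)
    hence "(-1)^degree g = \<kappa>" using lgn kk g(2) by simp
    hence gnk: "gn = smult ((-1)^degree g) g" using k kk by (simp add: mult.commute)
    show ?thesis
    proof (cases "even (degree g)")
      case False
      have "coeff gn 0 = coeff g 0" by (simp add: gn_def coeff_neg)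
      moreover have "coeff gn 0 = - coeff g 0" using gnk False by simp
      ultimately have "poly g 0 = 0" by (simp add: poly_0_coeff_0)
      moreover obtain m where "pcompose F X2 = g * m" using g(3) by (elim dvdE)
      ultimately have "poly (pcompose F X2) 0 = 0" by simp
      hence "poly F 0 = 0" by (simp add: poly_pcompose)
      thus ?thesis using F(3) by simp
    next
      case True
      have "neg g = g" using gnk True by (simp add: gn_def)
      hence ge: "g = pcompose (ev g) X2" by (rule even_poly)
      hence evF: "ev g dvd F" using g(3) by (metis dvd_X2comp)
      have ev0: "ev g \<noteq> 0" using ge g0 by auto
      have dge: "degree g = 2 * degree (ev g)" using ge by (metis degree_X2comp)
      have "F dvd ev g \<or> is_unit (ev g)" using irreducibleD'[OF F(1) evF] .
      moreover have "\<not> is_unit (ev g)" using is_unit_iff_degree[OF ev0] dge dg by simp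
      ultimately have "F dvd ev g" by blast
      hence "degree F \<le> degree (ev g)" using dvd_imp_degree_le ev0 by blast
      thus ?thesis using dge g(4) by simp
    qed
  qed
qed

lemma NT:
  fixes z m e u :: nat
  assumes eq: "z^u = m^e" and m: "m > 0" and u: "u > 0"
    and G: "Gcd ((\<lambda>p. multiplicity p m) ` prime_factors m) = 1"
  shows "u dvd e"
proof -
  have "u dvd e * multiplicity p m" if p: "p \<in> prime_factors m" for p
  proof (cases "e = 0")
    case True thus ?thesis by simp
  next
    case False
    have pp: "prime p" using p by auto
    have "z \<noteq> 0"
    proof
      assume "z = 0" thus False using eq u m by (simp add: zero_power)
    qed
    have "multiplicity p (z^u) = u * multiplicity p z"
      by (rule prime_elem_multiplicity_power_distrib) (use pp \<open>z \<noteq> 0\<close> in auto)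
    moreover have "multiplicity p (m^e) = e * multiplicity p m"
      by (rule prime_elem_multiplicity_power_distrib) (use pp m in auto)
    ultimately have "u * multiplicity p z = e * multiplicity p m" using eq by simp
    thus ?thesis by (metis dvd_triv_left)
  qed
  hence "u dvd Gcd ((*) e ` ((\<lambda>p. multiplicity p m) ` prime_factors m))"
    by (intro Gcd_greatest) auto
  also have "\<dots> = e" using G by (simp add: Gcd_mult)
  finally show ?thesis .
qed

lemma rat_root_nat:
  fixes q :: rat and N n :: nat
  assumes q: "q \<ge> 0" and eq: "q^n = of_nat N" and n: "n > 0"
  shows "\<exists>z::nat. q = of_nat z"
proof -
  obtain a s where qa: "quotient_of q = (a, s)" by (cases "quotient_of q")
  have s0: "s > 0" using quotient_of_denom_pos[OF qa] .
  have cop: "coprime a s" using quotient_of_coprime[OF qa] .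
  have qd: "q = of_int a / of_int s" using quotient_of_div[OF qa] .
  have "(of_int a / of_int s :: rat)^n = of_nat N" using eq qd by simp
  hence "(of_int (a^n) :: rat) = of_int (int N * s^n)" using s0 by (simp add: power_divide field_simps)
  hence an: "a^n = int N * s^n" by (simp only: of_int_eq_iff)
  have "s dvd a^n" using n an by (metis dvd_mult dvd_refl dvd_power)
  moreover have "coprime (a^n) s" using cop by simp
  ultimately have "is_unit s" using coprime_absorb_right by blast
  hence "s = 1" using s0 by simp
  hence "q = of_int a" using qd by simp
  moreover have "a \<ge> 0" using q \<open>q = of_int a\<close> by simp
  ultimately have "q = of_nat (nat a)" by simp
  thus ?thesis by blast
qed

lemma no_sq2: "(c::nat)^2 = 2 * d^2 \<Longrightarrow> d > 0 \<Longrightarrow> False"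
proof (induct c arbitrary: d rule: less_induct)
  case (less c)
  have "even (c^2)" using less(2) by simp
  hence "even c" by simp
  then obtain c1 where c1: "c = 2 * c1" by blast
  hence "4 * c1^2 = 2 * d^2" using less(2) by (simp add: power_mult_distrib)
  hence d2: "d^2 = 2 * c1^2" by simp
  have c1p: "c1 > 0" using d2 less(3) by (cases "c1 = 0") auto
  have "d^2 < c^2" using less(2) less(3) by simp
  hence "d < c" by (simp add: power_less_imp_less_base)
  thus False using less(1)[OF _ d2 c1p] by blast
qed

lemma arith_C:
  fixes C :: nat and a :: real
  assumes C: "C > 0" and a: "a \<in> \<rat>" and eq: "real C = 2 * a^2"
  shows "\<exists>d::nat. d > 0 \<and> C = 2 * d^2"
proof -
  obtain p q :: nat where q: "q \<noteq> 0" and pq: "\<bar>a\<bar> = real p / real q" and cop: "coprime p q"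
    using Rats_abs_nat_div_natE[OF a] by blast
  have "a^2 = (real p / real q)^2" using pq by (metis power2_abs)
  hence "real C * (real q)^2 = 2 * (real p)^2" using eq q by (simp add: power_divide field_simps)
  hence "real (C * q^2) = real (2 * p^2)" by simp
  hence e: "C * q^2 = 2 * p^2" by (simp only: of_nat_eq_iff)
  have "q^2 dvd 2 * p^2" using e by (metis dvd_triv_right)
  moreover have "coprime (q^2) (p^2)" using cop by (simp add: coprime_commute)
  ultimately have "q^2 dvd 2" by (simp add: coprime_dvd_mult_left_iff)
  hence "q^2 \<le> 2" by (rule dvd_imp_le) simp
  have "q < 2"
  proof (rule ccontr)
    assume "\<not> q < 2"
    hence "2^2 \<le> q^2" by (intro power_mono) auto
    thus False using \<open>q^2 \<le> 2\<close> by simp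
  qed
  hence "q = 1" using q by simp
  hence "C = 2 * p^2" using e by simp
  moreover have "p > 0" using C \<open>C = 2 * p^2\<close> by (cases "p = 0") auto
  ultimately show ?thesis by blast
qed

lemma poly_cpoly: "poly (cpoly p) (of_rat x) = of_rat (poly p x)"
  by (induct p) (auto simp: map_poly_pCons of_rat_add of_rat_mult)

lemma degree_cpoly: "degree (cpoly p) = degree p"
  by (rule degree_map_poly) simp

lemma cmod_prod_pow:
  assumes "\<And>a. a \<in> set as \<Longrightarrow> cmod a ^ n = R"
  shows "cmod (\<Prod>a\<leftarrow>as. 0 - a) ^ n = R ^ length as"
  using assms by (induct as) (auto simp: norm_mult power_mult_distrib)

lemma const_term:
  fixes g :: "rat poly" and n :: nat and B :: rat
  assumes g1: "lead_coeff g = 1" and dv: "g dvd (monom 1 n + [:B:])" and n: "n > 0" and B: "B > 0"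
  shows "\<bar>poly g 0\<bar>^n = B^(degree g)"
proof -
  define cg where "cg = cpoly g"
  have lcg: "lead_coeff cg = 1" using g1 by (simp add: cg_def degree_cpoly coeff_map_poly)
  have cg0: "cg \<noteq> 0" using lcg by auto
  obtain as where as: "cg = smult (lead_coeff cg) (rootpoly as)" "length as = degree cg"
    using complex_rootpoly[OF cg0] by blast
  have rs: "cg = rootpoly as" using as(1) lcg by simp
  have len: "length as = degree g" using as(2) by (simp add: cg_def degree_cpoly)
  obtain k where k: "monom 1 n + [:B:] = g * k" using dv by (elim dvdE)
  have ck: "monom 1 n + [:of_rat B:] = cg * cpoly k"
  proof -
    have "cpoly (monom 1 n + [:B:]) = cpoly (g * k)" using k by simp
    thus ?thesis by (simp add: cpoly_add cpoly_mult cpoly_monom cpoly_pCons cg_def)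
  qed
  have roots: "cmod a ^ n = real_of_rat B" if a: "a \<in> set as" for a
  proof -
    have "poly cg a = 0" using rs poly_rootpoly[OF a] by simp
    hence "poly (monom 1 n + [:of_rat B:]) a = 0" using ck by simp
    hence "a^n = - of_rat B" by (simp add: poly_monom eq_neg_iff_add_eq_0)
    hence "cmod (a^n) = cmod (of_rat B :: complex)" by simp
    moreover have "cmod (of_rat B :: complex) = real_of_rat B"
      using B by (metis cr_of_rat norm_of_real abs_of_pos zero_less_of_rat_iff)
    ultimately show ?thesis by (simp add: norm_power)
  qed
  have "of_rat (poly g 0) = poly cg 0" using poly_cpoly[of g 0] by (simp add: cg_def)
  also have "\<dots> = (\<Prod>a\<leftarrow>as. 0 - a)" using rs by (simp add: poly_rootpoly_eval)
  finally have pg: "(of_rat (poly g 0) :: complex) = (\<Prod>a\<leftarrow>as. 0 - a)" .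
  have "cmod (of_rat (poly g 0) :: complex) ^ n = (real_of_rat B) ^ length as"
    unfolding pg by (rule cmod_prod_pow[OF roots])
  moreover have "cmod (of_rat (poly g 0) :: complex) = real_of_rat \<bar>poly g 0\<bar>"
  proof -
    have "cmod (of_rat (poly g 0) :: complex) = \<bar>real_of_rat (poly g 0)\<bar>" by (metis cr_of_rat norm_of_real)
    also have "\<dots> = real_of_rat \<bar>poly g 0\<bar>"
      by (cases "poly g 0 \<ge> 0") (auto simp: of_rat_minus)
    finally show ?thesis .
  qed
  ultimately have "real_of_rat (\<bar>poly g 0\<bar>^n) = real_of_rat (B^degree g)"
    using len by (simp add: of_rat_power)
  thus ?thesis by (simp only: of_rat_eq_iff)
qed

lemma not_unit_degree: "(p::rat poly) \<noteq> 0 \<Longrightarrow> \<not> is_unit p \<Longrightarrow> degree p \<ge> 1"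
  using is_unit_iff_degree by fastforce

lemma base_irred:
  fixes u b m d r :: nat
  assumes u: "odd u" and bm: "b = m^d" and m: "m > 0"
    and G: "Gcd ((\<lambda>p. multiplicity p m) ` prime_factors m) = 1" and du: "coprime d u"
  shows "irreducible (monom 1 u + [:of_nat b ^ 2^r:] :: rat poly)"
proof -
  define F where "F = (monom 1 u + [:of_nat b ^ 2^r:] :: rat poly)"
  have u0: "u > 0" using u by (cases u) auto
  have cF: "coeff F i = (if i = u then 1 else if i = 0 then of_nat b ^ 2^r else 0)" for i
    using u0 by (auto simp: F_def coeff_monom coeff_pCons split: nat.split)
  have degF: "degree F = u"
  proof (rule order_antisym)
    show "degree F \<le> u" by (rule degree_le) (auto simp: cF)
    show "u \<le> degree F" by (rule le_degree) (simp add: cF)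
  qed
  have F0: "F \<noteq> 0" using degF u0 by auto
  have b0: "b > 0" using bm m by simp
  show ?thesis unfolding F_def[symmetric]
  proof (rule irreducibleI[OF F0])
    show "\<not> F dvd 1" using is_unit_iff_degree[OF F0] degF u0 by simp
    fix a c assume Fac: "F = a * c"
    show "a dvd 1 \<or> c dvd 1"
    proof (rule ccontr)
      assume nu: "\<not> (a dvd 1 \<or> c dvd 1)"
      have a0: "a \<noteq> 0" and c0: "c \<noteq> 0" using Fac F0 by auto
      have da: "degree a \<ge> 1" using not_unit_degree a0 nu by blast
      have dc: "degree c \<ge> 1" using not_unit_degree c0 nu by blast
      have dsum: "degree a + degree c = u" using Fac degF degree_mult_eq[OF a0 c0] by simp
      define g where "g = smult (inverse (lead_coeff a)) a"
      have la0: "lead_coeff a \<noteq> 0" using a0 by simp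
      have g1: "lead_coeff g = 1" using la0 by (simp add: g_def)
      have dg: "degree g = degree a" using la0 by (simp add: g_def)
      have "a = smult (lead_coeff a) g" using la0 by (simp add: g_def)
      hence "g dvd a" by (metis dvd_triv_right mult_smult_right mult.commute smult_dvd_cancel dvd_refl)
      hence gF: "g dvd monom 1 u + [:of_nat b ^ 2^r:]" using Fac F_def by (metis dvd_mult2)
      have "\<bar>poly g 0\<bar>^u = (of_nat b ^ 2^r)^(degree g)"
        by (rule const_term[OF g1 gF u0]) (use b0 in simp)
      also have "\<dots> = of_nat (b^(2^r * degree g))" by (simp add: power_mult)
      finally have e: "\<bar>poly g 0\<bar>^u = of_nat (b^(2^r * degree g))" .
      obtain z :: nat where z: "\<bar>poly g 0\<bar> = of_nat z" using rat_root_nat[OF _ e u0] by auto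
      have "of_nat (z^u) = (of_nat (b^(2^r * degree g)) :: rat)" using e z by simp
      hence "z^u = m^(d * 2^r * degree g)" by (simp only: of_nat_eq_iff bm power_mult mult.assoc)
      hence "u dvd (d * 2^r) * degree g" using NT[OF _ m u0 G] by simp
      moreover have "coprime u (d * 2^r)"
        using du u by (simp add: coprime_commute)
      ultimately have "u dvd degree g" by (simp add: coprime_dvd_mult_right_iff)
      hence "u \<le> degree a" using dg dvd_imp_le da by force
      thus False using dsum dc by simp
    qed
  qed
qed

lemma coeff_const1[simp]: "coeff [:c:] n = (if n = 0 then c else 0)"
  by (cases n) auto

lemma monom_X2: "pcompose (monom 1 n + [:B:]) X2 = (monom 1 (2*n) + [:B:] :: rat poly)"
  by (rule poly_eq_poly_eq_iff[THEN iffD1], rule ext)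
     (simp add: poly_pcompose poly_monom power_mult power_mult_distrib power2_eq_square mult.commute)

lemma coeff_mB: "coeff (monom 1 n + [:B:] :: rat poly) i = (if i = n then 1 else 0) + (if i = 0 then B else 0)"
  by (auto simp: coeff_monom coeff_pCons split: nat.split)

lemma degree_mB: "n > 0 \<Longrightarrow> degree (monom 1 n + [:B:] :: rat poly) = n"
proof -
  assume n: "n > 0"
  show ?thesis
  proof (rule order_antisym)
    show "degree (monom 1 n + [:B:] :: rat poly) \<le> n" by (rule degree_le) (use n in \<open>auto simp: coeff_mB\<close>)
    show "n \<le> degree (monom 1 n + [:B:] :: rat poly)" by (rule le_degree) (use n in \<open>auto simp: coeff_mB\<close>)
  qed
qed

lemma lead_mB: "n > 0 \<Longrightarrow> lead_coeff (monom 1 n + [:B:] :: rat poly) = 1"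
  by (simp only: degree_mB coeff_mB) simp

lemma not_irred_split:
  fixes F :: "rat poly"
  assumes "\<not> irreducible F" "degree F \<ge> 1"
  shows "\<exists>g. irreducible g \<and> lead_coeff g = 1 \<and> g dvd F \<and> degree g < degree F"
proof -
  have F0: "F \<noteq> 0" using assms(2) by auto
  have Fu: "\<not> is_unit F" using is_unit_iff_degree[OF F0] assms(2) by simp
  obtain a c where ac: "F = a * c" "\<not> is_unit a" "\<not> is_unit c"
    using assms(1) F0 Fu unfolding irreducible_def by blast
  have a0: "a \<noteq> 0" and c0: "c \<noteq> 0" using ac F0 by auto
  have dc: "degree c \<ge> 1" using not_unit_degree[OF c0 ac(3)] .
  have da: "degree a < degree F" using ac(1) degree_mult_eq[OF a0 c0] dc by simp
  obtain p where p: "p dvd a" "prime p" using prime_divisor_exists[OF a0 ac(2)] by blast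
  have p0: "p \<noteq> 0" using p(2) by auto
  have ip: "irreducible p" using p(2) prime_elem_imp_irreducible by blast
  define g where "g = smult (inverse (lead_coeff p)) p"
  have lp0: "lead_coeff p \<noteq> 0" using p0 by simp
  have g1: "lead_coeff g = 1" using lp0 by (simp add: g_def)
  have pg: "p = g * [:lead_coeff p:]" using lp0 by (simp add: g_def)
  have gp: "g dvd p" using pg by (metis dvd_triv_left)
  have g0: "g \<noteq> 0" using g1 by auto
  have dgp: "degree g = degree p" using lp0 by (simp add: g_def)
  have pu: "\<not> is_unit p" using ip irreducible_not_unit by blast
  have gu: "\<not> is_unit g" using is_unit_iff_degree[OF g0] is_unit_iff_degree[OF p0] pu dgp by simp
  have ig: "irreducible g" by (rule irreducible_mono[OF ip gp gu])
  have "degree p \<le> degree a" using dvd_imp_degree_le[OF p(1) a0] .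
  hence "degree g < degree F" using dgp da by simp
  moreover have "g dvd F" using gp p(1) ac(1) by (meson dvd_mult2 dvd_trans)
  ultimately show ?thesis using ig g1 by blast
qed

lemma irred_chain:
  fixes u b m d r s :: nat
  assumes u: "odd u" and bm: "b = m^d" and m: "m > 0"
    and G: "Gcd ((\<lambda>p. multiplicity p m) ` prime_factors m) = 1" and du: "coprime d u"
    and r: "r > 0"
    and nex: "\<not> (s \<ge> 1 \<and> r = 1 \<and> (\<exists>d'>0. b = 2 * d'^2))"
  shows "j \<le> r + s \<Longrightarrow> irreducible (monom 1 (2^j*u) + [:of_nat b ^ 2^r:] :: rat poly)"
proof (induct j)
  case 0
  show ?case using base_irred[OF u bm m G du] by simp
next
  case (Suc j)
  define B :: rat where "B = of_nat b ^ 2^r"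
  define Fj where "Fj = (monom 1 (2^j*u) + [:B:] :: rat poly)"
  have u0: "u > 0" using u by (cases u) auto
  have b0: "b > 0" using bm m by simp
  have B0: "B > 0" using b0 by (simp add: B_def)
  have iF: "irreducible Fj" using Suc by (simp add: Fj_def B_def)
  have dFj: "degree Fj = 2^j*u" unfolding Fj_def by (rule degree_mB) (use u0 in simp)
  have lFj: "lead_coeff Fj = 1" unfolding Fj_def by (rule lead_mB) (use u0 in simp)
  have pF0: "poly Fj 0 = B" using u0 by (simp add: Fj_def poly_monom zero_power)
  have pFj: "poly Fj 0 \<noteq> 0" using B0 pF0 by simp
  have comp: "pcompose Fj X2 = monom 1 (2^Suc j*u) + [:B:]"
    unfolding Fj_def by (simp add: monom_X2 mult.assoc)
  show ?case
  proof (rule ccontr)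
    assume ni: "\<not> irreducible (monom 1 (2^Suc j*u) + [:of_nat b ^ 2^r:] :: rat poly)"
    have dF': "degree (pcompose Fj X2) = 2 * (2^j*u)" using dFj by (simp add: degree_X2comp)
    have "\<not> irreducible (pcompose Fj X2)" using ni comp by (simp add: B_def)
    moreover have "degree (pcompose Fj X2) \<ge> 1" using dF' u0 by simp
    ultimately obtain g where g: "irreducible g" "lead_coeff g = 1" "g dvd pcompose Fj X2"
        "degree g < degree (pcompose Fj X2)"
      using not_irred_split by blast
    have "degree g < 2 * degree Fj" using g(4) dF' dFj by simp
    then obtain E Q where EQ: "Fj = smult ((-1)^degree Fj) (E^2 - [:0,1:] * Q^2)"
      using step[OF iF lFj pFj g(1) g(2) g(3)] by blast
    show False
    proof (cases j)
      case 0
      hence "odd (degree Fj)" using dFj u by simp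
      hence "Fj = - (E^2 - [:0,1:] * Q^2)" using EQ by simp
      hence "poly Fj 0 = - (poly E 0 * poly E 0)" by (simp add: power2_eq_square)
      moreover have "poly Fj 0 = B" by (rule pF0)
      moreover have "0 \<le> poly E 0 * poly E 0" by simp
      ultimately show False using B0 by linarith
    next
      case (Suc j')
      define h where "h = 2^j' * u"
      define C where "C = b^(2^(r-1))"
      have h1: "h \<ge> 1" using u0 by (simp add: h_def)
      have C0: "C > 0" using b0 by (simp add: C_def)
      have ev: "even (degree Fj)" using dFj Suc by simp
      have "E^2 - [:0,1:] * Q^2 = Fj" using EQ ev by simp
      also have "\<dots> = monom 1 (2*h) + [:of_nat C ^ 2:]"
      proof -
        have "2^j*u = 2*h" using Suc by (simp add: h_def)
        moreover have "B = of_nat C ^ 2"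
        proof -
          have "r = Suc (r - 1)" using r by simp
          hence "(2::nat)^r = 2^(r-1) * 2" by (metis power_Suc2)
          thus ?thesis by (simp add: B_def C_def power_mult)
        qed
        ultimately show ?thesis by (simp add: Fj_def)
      qed
      finally obtain a where a: "a \<in> \<rat>" "real C = 2 * a^2" using Lstar_rat[OF h1 C0] by blast
      obtain d' where d': "d' > 0" "C = 2 * d'^2" using arith_C[OF C0 a] by blast
      show False
      proof (cases "r = 1")
        case True
        have "C = b" using True by (simp add: C_def)
        moreover have "s \<ge> 1" using Suc.prems Suc True by simp
        ultimately show False using nex d' True by blast
      next
        case False
        have "C = (b^(2^(r-2)))^2"
        proof -
          have "r - 1 = Suc (r - 2)" using False r by simp
          hence "(2::nat)^(r-1) = 2^(r-2) * 2" by (metis power_Suc2)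
          thus ?thesis by (simp add: C_def power_mult)
        qed
        hence "(b^(2^(r-2)))^2 = 2 * d'^2" using d'(2) by simp
        thus False using no_sq2 d'(1) by blast
      qed
    qed
  qed
qed

lemma propP_decomp:
  assumes "property_P N b" "b > 0"
  shows "\<exists>m d. b = m^d \<and> m > 0 \<and> Gcd ((\<lambda>p. multiplicity p m) ` prime_factors m) = 1 \<and> coprime d N"
proof (cases "prime b")
  case True
  have "prime_factors b = {b}" using True by (rule prime_prime_factors)
  moreover have "multiplicity b b = 1" using True by (intro multiplicity_self) auto
  ultimately have "Gcd ((\<lambda>p. multiplicity p b) ` prime_factors b) = 1" by simp
  thus ?thesis using assms(2) by (intro exI[of _ b] exI[of _ 1]) auto
next
  case False
  then obtain m d where "m > 0" "b = m^d" "Gcd ((\<lambda>p. multiplicity p m) ` prime_factors m) = 1" "coprime d N"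
    using assms(1) unfolding property_P_def by blast
  thus ?thesis by blast
qed

abbreviation ipoly :: "int poly \<Rightarrow> rat poly" where
  "ipoly p \<equiv> map_poly of_int p"

lemma ipoly_mult: "ipoly (p * q) = ipoly p * ipoly q"
  by (intro poly_eqI) (simp add: coeff_map_poly coeff_mult of_int_sum)
lemma ipoly_degree: "degree (ipoly p) = degree p"
  by (rule degree_map_poly) simp

lemma reducible_not_irred:
  assumes "reducible_Z f" shows "\<not> irreducible (ipoly f)"
proof
  assume irr: "irreducible (ipoly f)"
  obtain g h where gh: "f = g * h" "degree g \<ge> 1" "degree h \<ge> 1"
    using assms unfolding reducible_Z_def by blast
  have "ipoly f = ipoly g * ipoly h" using gh(1) by (simp add: ipoly_mult)
  hence "is_unit (ipoly g) \<or> is_unit (ipoly h)" using irreducibleD[OF irr] by blast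
  moreover have g0: "ipoly g \<noteq> 0" "ipoly h \<noteq> 0" using gh(2,3) by (auto simp: ipoly_degree[symmetric])
  moreover have "\<not> is_unit (ipoly g)" using is_unit_iff_degree[OF g0(1)] gh(2) ipoly_degree[of g] by simp
  moreover have "\<not> is_unit (ipoly h)" using is_unit_iff_degree[OF g0(2)] gh(3) ipoly_degree[of h] by simp
  ultimately show False by blast
qed

lemma ipoly_f: "ipoly (monom 1 n + [:int b ^ (2^r):]) = monom 1 n + [:of_nat b ^ 2^r:]"
  by (intro poly_eqI) (auto simp: coeff_map_poly coeff_monom)

lemma explicit_factor:
  fixes s' d :: nat
  assumes "s' > 0"
  shows "reducible_Z (monom 1 (2 * (2 * s')) + [: int (2 * d^2) ^ 2 :])"
proof -
  define g :: "int poly" where "g = monom 1 (2*s') + monom (2 * int d) s' + [:2 * int d^2:]"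
  define h :: "int poly" where "h = monom 1 (2*s') - monom (2 * int d) s' + [:2 * int d^2:]"
  have cg: "coeff g i = (if i = 2*s' then 1 else 0) + (if i = s' then 2 * int d else 0) + (if i = 0 then 2 * int d^2 else 0)" for i
    by (auto simp: g_def coeff_monom coeff_pCons split: nat.split)
  have ch: "coeff h i = (if i = 2*s' then 1 else 0) - (if i = s' then 2 * int d else 0) + (if i = 0 then 2 * int d^2 else 0)" for i
    by (auto simp: h_def coeff_monom coeff_pCons split: nat.split)
  have dg: "degree g = 2*s'"
    by (rule order_antisym, rule degree_le) (use assms in \<open>auto simp: cg intro!: le_degree\<close>)
  have dh: "degree h = 2*s'"
    by (rule order_antisym, rule degree_le) (use assms in \<open>auto simp: ch intro!: le_degree\<close>)
  have "monom 1 (2 * (2 * s')) + [: int (2 * d^2) ^ 2 :] = g * h"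
  proof (rule poly_eq_poly_eq_iff[THEN iffD1], rule ext)
    fix x :: int
    define X where "X = x ^ s'"
    have "poly (g * h) x = (X^2 + 2 * int d * X + 2 * int d^2) * (X^2 - 2 * int d * X + 2 * int d^2)"
      by (simp add: g_def h_def poly_monom X_def power_mult mult.commute)
    also have "\<dots> = X^4 + 4 * int d^4" by algebra
    also have "\<dots> = poly (monom 1 (2 * (2 * s')) + [: int (2 * d^2) ^ 2 :]) x"
      by (simp add: poly_monom X_def power_mult[symmetric] power_mult_distrib) (simp add: mult.commute)
    finally show "poly (monom 1 (2 * (2 * s')) + [: int (2 * d^2) ^ 2 :]) x = poly (g * h) x" by simp
  qed
  thus ?thesis unfolding reducible_Z_def using dg dh assms by (intro exI[of _ g] exI[of _ h]) auto
qed

theorem lemma6: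
  fixes t r b :: nat
  assumes "t > 0" and "r > 0" and "b > 0"
    and "property_P (2 ^ r * t) b"
  shows "reducible_Z (monom 1 (2 ^ r * t) + [: int b ^ (2 ^ r) :]) \<longleftrightarrow>
           (even t \<and> r = 1 \<and> (\<exists>d::nat. d > 0 \<and> b = 2 * d ^ 2))"
proof
  assume red: "reducible_Z (monom 1 (2 ^ r * t) + [: int b ^ (2 ^ r) :])"
  show "even t \<and> r = 1 \<and> (\<exists>d::nat. d > 0 \<and> b = 2 * d ^ 2)"
  proof (rule ccontr)
    assume nR: "\<not> (even t \<and> r = 1 \<and> (\<exists>d::nat. d > 0 \<and> b = 2 * d ^ 2))"
    obtain m d where md: "b = m^d" "m > 0" "Gcd ((\<lambda>p. multiplicity p m) ` prime_factors m) = 1"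
        "coprime d (2^r * t)"
      using propP_decomp[OF assms(4) assms(3)] by blast
    have tne: "t \<noteq> 0" using assms(1) by simp
    have two: "\<not> is_unit (2::nat)" by simp
    obtain u where tu: "t = 2 ^ multiplicity 2 t * u" "\<not> 2 dvd u"
      using multiplicity_decompose'[OF tne two] by blast
    define s where "s = multiplicity 2 t"
    have tsu: "t = 2^s * u" using tu(1) by (simp add: s_def)
    have ou: "odd u" using tu(2) by simp
    have "u dvd 2^r * t" using tsu by simp
    hence du: "coprime d u" using md(4) by (meson coprime_divisors dvd_refl)
    have nex: "\<not> (s \<ge> 1 \<and> r = 1 \<and> (\<exists>d'>0. b = 2 * d'^2))"
    proof
      assume "s \<ge> 1 \<and> r = 1 \<and> (\<exists>d'>0. b = 2 * d'^2)"
      moreover hence "even t" using tsu by (cases s) auto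
      ultimately show False using nR by blast
    qed
    have "irreducible (monom 1 (2^(r+s)*u) + [:of_nat b ^ 2^r:] :: rat poly)"
      by (rule irred_chain[OF ou md(1) md(2) md(3) du assms(2) nex]) simp
    moreover have "2^(r+s)*u = 2^r * t" using tsu by (simp add: power_add mult.assoc)
    ultimately have "irreducible (ipoly (monom 1 (2 ^ r * t) + [: int b ^ (2 ^ r) :]))"
      by (simp add: ipoly_f)
    thus False using reducible_not_irred[OF red] by blast
  qed
next
  assume R: "even t \<and> r = 1 \<and> (\<exists>d::nat. d > 0 \<and> b = 2 * d ^ 2)"
  then obtain d where d: "d > 0" "b = 2 * d^2" by blast
  obtain s' where s': "t = 2 * s'" using R by blast
  have s'0: "s' > 0" using s' assms(1) by simp
  have "monom 1 (2 ^ r * t) + [: int b ^ (2 ^ r) :] = monom 1 (2 * (2 * s')) + [: int (2 * d^2) ^ 2 :]"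
    using R s' d by simp
  thus "reducible_Z (monom 1 (2 ^ r * t) + [: int b ^ (2 ^ r) :])"
    using explicit_factor[OF s'0, of d] by simp
qed

end
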